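(* Assume condition (PV) holds. Then, locally (for conditioning values $d\in\mathcal{D}(\epsilon)$ and $z\in\mathcal{Z}(\epsilon)$): (a) $Y\perp\!\!\!\perp Z\mid(D,U)$; (b) $W\perp\!\!\!\perp(D,Z)\mid U$. If in addition $\eta_a\perp\!\!\!\perp U\mid D=d$ for all $d\in\mathcal{D}(\epsilon)$, then also: (c) $A\perp\!\!\!\perp U\mid D$.
   Context: Setting. All random variables live on one probability space. The variables are: - $Y\in\mathbb{R}$, the outcome; - $A\in\{0,1\}$, the treatment; - $D\in\mathbb{R}$, the running variable, with cutoff $d^*$; - $Z$, a placebo treatment, and $W$, a placebo outcome; - $U$, an unobserved confounder; - $\eta_y,\eta_w,\eta_a$, heterogeneity terms. There are structural functions $Y(a,d,z,u,\eta_y)$, $W(a,d,z,u,\eta_w)$ and $A(d,z,u,\eta_a)$, written $Y(a,d,u,\eta_y)$, $W(u,\eta_w)$ and $A(d,\eta_a)$ under exclusion. For $\epsilon>0$, $\mathcal{D}(\epsilon)=(d^*-\epsilon,d^* )\cup(d^*,d^*+\epsilon)$, and $\mathcal{Z}(\epsilon)$ is a set with $P(Z\in\mathcal{Z}(\epsilon)\mid D\in\mathcal{D}(\epsilon))=1$. (PV) There is $\epsilon>0$ such that for all $d\in\mathcal{D}(\epsilon)$ and $z\in\mathcal{Z}(\epsilon)$: (a) if $A=a$, $D=d$, $Z=z$, then $Y=Y(a,d,z,U,\eta_y)$ and $W=W(a,d,z,U,\eta_w)$ a.s.; if $D=d$, $Z=z$, then $A=A(d,z,U,\eta_a)$ a.s.;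 (b) $Z\perp\!\!\!\perp(\eta_y,\eta_a)\mid(U,D)$ and $\eta_w\perp\!\!\!\perp(D,Z)\mid U$; (c) densities exist and $f(a,d,z\mid u)>0$ whenever $f(u)>0$; (d) a.s. $Y(a,d,z,U,\eta_y)=Y(a,d,U,\eta_y)$, $W(a,d,z,U,\eta_w)=W(U,\eta_w)$ and $A(d,z,U,\eta_a)=A(d,\eta_a)$. *)

theory Defs
  imports "HOL-Probability.Probability"
begin

definition cprob :: "'a measure \<Rightarrow> ('a \<Rightarrow> 'c) \<Rightarrow> 'c measure \<Rightarrow> 'a set \<Rightarrow> 'a \<Rightarrow> real" where
  "cprob M Z MZ E = real_cond_exp M (vimage_algebra (space M) Z MZ) (indicator E)"

definition cond_indep ::
  "'a measure \<Rightarrow> 'b measure \<Rightarrow> ('a \<Rightarrow> 'b) \<Rightarrow> 'c measure \<Rightarrow> ('a \<Rightarrow> 'c)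
     \<Rightarrow> 'd measure \<Rightarrow> ('a \<Rightarrow> 'd) \<Rightarrow> bool" where
  "cond_indep M MX X MY Y MZ Z \<longleftrightarrow>
     (\<forall>A\<in>sets MX. \<forall>B\<in>sets MY. AE \<omega> in M.
        cprob M Z MZ ({x\<in>space M. X x \<in> A} \<inter> {x\<in>space M. Y x \<in> B}) \<omega>
        = cprob M Z MZ {x\<in>space M. X x \<in> A} \<omega> * cprob M Z MZ {x\<in>space M. Y x \<in> B} \<omega>)"

definition Dnbhd :: "real \<Rightarrow> real \<Rightarrow> real set" where
  "Dnbhd dstar eps = {dstar - eps <..< dstar} \<union> {dstar <..< dstar + eps}"

definition local_measure :: "'a measure \<Rightarrow> ('a \<Rightarrow> real) \<Rightarrow> real \<Rightarrow> real \<Rightarrow> 'a measure" where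
  "local_measure M D dstar eps = uniform_measure M {\<omega>\<in>space M. D \<omega> \<in> Dnbhd dstar eps}"

end

theory Submission
  imports Defs
begin
lemma set_integrable_I:
  fixes f :: "'a \<Rightarrow> real"
  shows "integrable N f \<Longrightarrow> E \<in> sets N \<Longrightarrow> set_integrable N E f"
  unfolding set_integrable_def by (rule integrable_mult_indicator)

lemma set_integral_compl_real:
  fixes f :: "'a \<Rightarrow> real"
  assumes f: "integrable N f" and E: "E \<in> sets N"
  shows "set_lebesgue_integral N (space N - E) f = integral\<^sup>L N f - set_lebesgue_integral N E f"
proof -
  have "set_lebesgue_integral N (E \<union> (space N - E)) f
      = set_lebesgue_integral N E f + set_lebesgue_integral N (space N - E) f"
    by (rule set_integral_Un) (auto intro!: set_integrable_I f E)
  moreover have "E \<union> (space N - E) = space N" using sets.sets_into_space[OF E] by auto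
  ultimately show ?thesis using set_integral_space[OF f] by simp
qed

lemma ci_fun:
  fixes N :: "'a measure"
  assumes fin: "finite_measure N"
    and mX[measurable]: "X \<in> measurable N MX" and mV[measurable]: "V \<in> measurable N MV"
    and mW[measurable]: "W \<in> measurable N MW"
    and mg[measurable]: "g \<in> measurable (MV \<Otimes>\<^sub>M MW) MG"
    and ci: "cond_indep N MX X MV V MW W"
  shows "cond_indep N MX X MG (\<lambda>x. g (V x, W x)) MW W"
proof -
  define F where "F = vimage_algebra (space N) W MW"
  have WF: "W \<in> space N \<rightarrow> space MW" using mW by (simp add: measurable_def)
  have subalg: "subalgebra N F"
    unfolding subalgebra_def F_def using measurable_iff_sets[of W N MW] mW by auto
  interpret finite_measure N by (rule fin)
  interpret fs: finite_measure_subalgebra N F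
    by unfold_locales (rule subalg)
  have inF: "{x\<in>space N. W x \<in> b} \<in> sets F" if "b \<in> sets MW" for b
  proof -
    have "W -` b \<inter> space N \<in> sets F" unfolding F_def by (rule in_vimage_algebra[OF that])
    moreover have "W -` b \<inter> space N = {x\<in>space N. W x \<in> b}" by auto
    ultimately show ?thesis by simp
  qed
  have ind_int: "integrable N (indicator E :: _ \<Rightarrow> real)" if "E \<in> sets N" for E
    using that emeasure_finite[of E] by (intro integrable_real_indicator) (auto simp: less_top[symmetric])
  have FN: "G \<in> sets N" if "G \<in> sets F" for G
    using subalg that unfolding subalgebra_def by auto
  let ?ce = "real_cond_exp N F"
  show ?thesis
    unfolding cond_indep_def cprob_def F_def[symmetric]
  proof (intro ballI)
    fix A C assume A[measurable]: "A \<in> sets MX" and C[measurable]: "C \<in> sets MG"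
    define SX where "SX = {x\<in>space N. X x \<in> A}"
    have SX[measurable]: "SX \<in> sets N" unfolding SX_def by measurable
    define c where "c = ?ce (indicator SX)"
    have cF[measurable]: "c \<in> borel_measurable F" unfolding c_def by simp
    have cN[measurable]: "c \<in> borel_measurable N" unfolding c_def by simp
    have cint: "integrable N c" unfolding c_def by (rule fs.real_cond_exp_int(1)) (simp add: ind_int)
    define ES where "ES = (\<lambda>S. {x\<in>space N. (V x, W x) \<in> S})"
    have ES[measurable]: "ES S \<in> sets N" if "S \<in> sets (MV \<Otimes>\<^sub>M MW)" for S
      unfolding ES_def using that by measurable
    have key: "AE x in N. ?ce (indicator (SX \<inter> E)) x = c x * ?ce (indicator E) x"
      if E[measurable]: "E \<in> sets N"
        and H: "\<And>G. G \<in> sets F \<Longrightarrow> set_lebesgue_integral N E (\<lambda>x. indicator G x * indicator SX x)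
                 = set_lebesgue_integral N E (\<lambda>x. indicator G x * c x)" for E
    proof (rule fs.real_cond_exp_charact)
      fix G assume G: "G \<in> sets F"
      then have GN[measurable]: "G \<in> sets N" by (rule FN)
      have GF[measurable]: "indicator G \<in> borel_measurable F" using G by simp
      have i1: "integrable N (\<lambda>x. (indicator G x * c x) * indicator E x)"
        using integrable_mult_indicator[OF E integrable_mult_indicator[OF GN cint]]
        by (simp add: mult_ac)
      have "set_lebesgue_integral N G (\<lambda>x. c x * ?ce (indicator E) x)
           = (\<integral>x. (indicator G x * c x) * ?ce (indicator E) x \<partial>N)"
        unfolding set_lebesgue_integral_def by (simp add: mult_ac)
      also have "\<dots> = (\<integral>x. (indicator G x * c x) * indicator E x \<partial>N)"
        by (rule fs.real_cond_exp_intg(2)[OF i1]) simp_all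
      also have "\<dots> = set_lebesgue_integral N E (\<lambda>x. indicator G x * c x)"
        unfolding set_lebesgue_integral_def by (simp add: mult_ac)
      also have "\<dots> = set_lebesgue_integral N E (\<lambda>x. indicator G x * indicator SX x)"
        using H[OF G] by simp
      also have "\<dots> = set_lebesgue_integral N G (indicator (SX \<inter> E))"
        unfolding set_lebesgue_integral_def
        by (rule Bochner_Integration.integral_cong) (auto simp: indicator_def)
      finally show "set_lebesgue_integral N G (indicator (SX \<inter> E))
           = set_lebesgue_integral N G (\<lambda>x. c x * ?ce (indicator E) x)" by simp
    next
      show "integrable N (indicator (SX \<inter> E) :: _ \<Rightarrow> real)" by (simp add: ind_int)
    next
      have i2: "integrable N (\<lambda>x. c x * indicator E x)"
        using integrable_mult_indicator[OF E cint] by (simp add: mult_ac)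
      show "integrable N (\<lambda>x. c x * ?ce (indicator E) x)"
        by (rule fs.real_cond_exp_intg(1)[OF i2]) simp_all
    next
      show "(\<lambda>x. c x * ?ce (indicator E) x) \<in> borel_measurable F" by simp
    qed
    have Q: "\<forall>G\<in>sets F. set_lebesgue_integral N (ES S) (\<lambda>x. indicator G x * indicator SX x)
               = set_lebesgue_integral N (ES S) (\<lambda>x. indicator G x * c x)"
      if S: "S \<in> sets (MV \<Otimes>\<^sub>M MW)" for S
      using Int_stable_pair_measure_generator pair_measure_closed S unfolding sets_pair_measure
    proof (induct rule: sigma_sets_induct_disjoint)
      case (basic S')
      then obtain a b where S': "S' = a \<times> b" "a \<in> sets MV" "b \<in> sets MW" by auto
      show ?case
      proof
        fix G assume G: "G \<in> sets F"
        define G' where "G' = G \<inter> {x\<in>space N. W x \<in> b}"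
        have G'F: "G' \<in> sets F" using G inF[OF S'(3)] unfolding G'_def by auto
        have G'N[measurable]: "G' \<in> sets N" by (rule FN[OF G'F])
        have G'FF[measurable]: "indicator G' \<in> borel_measurable F" using G'F by simp
        define EV where "EV = {x\<in>space N. V x \<in> a}"
        have EV[measurable]: "EV \<in> sets N" unfolding EV_def using S'(2) by measurable
        have ci_a: "AE x in N. ?ce (indicator (SX \<inter> EV)) x = c x * ?ce (indicator EV) x"
          using ci A S'(2) unfolding cond_indep_def cprob_def F_def[symmetric] SX_def EV_def c_def
          by blast
        have i1: "integrable N (\<lambda>x. indicator G' x * indicator (SX \<inter> EV) x :: real)"
          using integrable_mult_indicator[OF G'N ind_int[of "SX \<inter> EV"]] by simp
        have i2: "integrable N (\<lambda>x. (indicator G' x * c x) * indicator EV x)"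
          using integrable_mult_indicator[OF EV integrable_mult_indicator[OF G'N cint]]
          by (simp add: mult_ac)
        have "set_lebesgue_integral N (ES S') (\<lambda>x. indicator G x * indicator SX x)
            = (\<integral>x. (indicator G' x * indicator (SX \<inter> EV) x :: real) \<partial>N)"
          unfolding set_lebesgue_integral_def S'(1) ES_def G'_def SX_def EV_def
          by (rule Bochner_Integration.integral_cong) (auto simp: indicator_def)
        also have "\<dots> = (\<integral>x. indicator G' x * ?ce (indicator (SX \<inter> EV)) x \<partial>N)"
          by (rule fs.real_cond_exp_intg(2)[symmetric, OF i1]) simp_all
        also have "\<dots> = (\<integral>x. indicator G' x * (c x * ?ce (indicator EV) x) \<partial>N)"
          by (rule integral_cong_AE) (use ci_a in auto)
        also have "\<dots> = (\<integral>x. (indicator G' x * c x) * ?ce (indicator EV) x \<partial>N)"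
          by (simp add: mult_ac)
        also have "\<dots> = (\<integral>x. (indicator G' x * c x) * indicator EV x \<partial>N)"
          by (rule fs.real_cond_exp_intg(2)[OF i2]) simp_all
        also have "\<dots> = set_lebesgue_integral N (ES S') (\<lambda>x. indicator G x * c x)"
          unfolding set_lebesgue_integral_def S'(1) ES_def G'_def SX_def EV_def
          by (rule Bochner_Integration.integral_cong) (auto simp: indicator_def)
        finally show "set_lebesgue_integral N (ES S') (\<lambda>x. indicator G x * indicator SX x)
            = set_lebesgue_integral N (ES S') (\<lambda>x. indicator G x * c x)" .
      qed
    next
      case empty
      show ?case by (simp add: ES_def set_lebesgue_integral_def)
    next
      case (compl S')
      then have S'[measurable]: "S' \<in> sets (MV \<Otimes>\<^sub>M MW)" by (simp add: sets_pair_measure)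
      have ESc: "ES (space MV \<times> space MW - S') = space N - ES S'"
        unfolding ES_def using measurable_space[OF mV] measurable_space[OF mW] by auto
      show ?case
      proof
        fix G assume G: "G \<in> sets F"
        have GN[measurable]: "G \<in> sets N" by (rule FN[OF G])
        have i1: "integrable N (\<lambda>x. indicator G x * indicator SX x :: real)"
          using integrable_mult_indicator[OF GN ind_int[of SX]] by simp
        have i2: "integrable N (\<lambda>x. indicator G x * c x)"
          using integrable_mult_indicator[OF GN cint] by simp
        have tot: "(\<integral>x. indicator G x * indicator SX x \<partial>N) = (\<integral>x. indicator G x * c x \<partial>N)"
          unfolding c_def
          by (rule fs.real_cond_exp_intg(2)[symmetric]) (use i1 G in simp_all)
        show "set_lebesgue_integral N (ES (space MV \<times> space MW - S')) (\<lambda>x. indicator G x * indicator SX x)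
            = set_lebesgue_integral N (ES (space MV \<times> space MW - S')) (\<lambda>x. indicator G x * c x)"
          unfolding ESc
          using set_integral_compl_real[OF i1 ES[OF S']] set_integral_compl_real[OF i2 ES[OF S']]
            tot compl(2) G by simp
      qed
    next
      case (union Ai)
      then have Ai[measurable]: "\<And>i. Ai i \<in> sets (MV \<Otimes>\<^sub>M MW)" by (auto simp add: sets_pair_measure)
      have ESU: "ES (\<Union>i. Ai i) = (\<Union>i. ES (Ai i))" unfolding ES_def by auto
      have disj: "ES (Ai i) \<inter> ES (Ai j) = {}" if "i \<noteq> j" for i j
        using union(1) that unfolding ES_def disjoint_family_on_def by auto
      have ESUm: "(\<Union>i. ES (Ai i)) \<in> sets N" using ES[OF Ai] by blast
      show ?case
      proof
        fix G assume G: "G \<in> sets F"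
        have GN[measurable]: "G \<in> sets N" by (rule FN[OF G])
        have i1: "integrable N (\<lambda>x. indicator G x * indicator SX x :: real)"
          using integrable_mult_indicator[OF GN ind_int[of SX]] by simp
        have i2: "integrable N (\<lambda>x. indicator G x * c x)"
          using integrable_mult_indicator[OF GN cint] by simp
        show "set_lebesgue_integral N (ES (\<Union>i. Ai i)) (\<lambda>x. indicator G x * indicator SX x)
            = set_lebesgue_integral N (ES (\<Union>i. Ai i)) (\<lambda>x. indicator G x * c x)"
          unfolding ESU
          using lebesgue_integral_countable_add[OF ES[OF Ai] disj set_integrable_I[OF i1 ESUm]]
            lebesgue_integral_countable_add[OF ES[OF Ai] disj set_integrable_I[OF i2 ESUm]]
            union(3) G by simp
      qed
    qed
    show "AE x in N. ?ce (indicator ({x \<in> space N. X x \<in> A} \<inter> {x \<in> space N. g (V x, W x) \<in> C})) x =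
            ?ce (indicator {x \<in> space N. X x \<in> A}) x * ?ce (indicator {x \<in> space N. g (V x, W x) \<in> C}) x"
    proof -
      define S0 where "S0 = g -` C \<inter> space (MV \<Otimes>\<^sub>M MW)"
      have S0: "S0 \<in> sets (MV \<Otimes>\<^sub>M MW)" unfolding S0_def by (rule measurable_sets[OF mg C])
      have ES0: "ES S0 = {x \<in> space N. g (V x, W x) \<in> C}"
        unfolding ES_def S0_def using measurable_space[OF mV] measurable_space[OF mW]
        by (auto simp: space_pair_measure)
      show ?thesis using key[OF ES[OF S0]] Q[OF S0] unfolding ES0 c_def SX_def by simp
    qed
  qed
qed

lemma ci_sym:
  "cond_indep N MX X MY Y MZ Z \<Longrightarrow> cond_indep N MY Y MX X MZ Z"
  unfolding cond_indep_def by (simp add: Int_commute mult.commute)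

lemma ci_cong:
  fixes N :: "'a measure"
  assumes fin: "finite_measure N"
    and mX[measurable]: "X \<in> measurable N MX" and mY[measurable]: "Y \<in> measurable N MY"
    and mY'[measurable]: "Y' \<in> measurable N MY" and mZ[measurable]: "Z \<in> measurable N MZ"
    and ae: "AE x in N. Y x = Y' x" and ci: "cond_indep N MX X MY Y MZ Z"
  shows "cond_indep N MX X MY Y' MZ Z"
proof -
  define F where "F = vimage_algebra (space N) Z MZ"
  have subalg: "subalgebra N F"
    unfolding subalgebra_def F_def using measurable_iff_sets[of Z N MZ] mZ by auto
  interpret finite_measure N by (rule fin)
  interpret fs: finite_measure_subalgebra N F
    by unfold_locales (rule subalg)
  let ?ce = "real_cond_exp N F"
  show ?thesis
    unfolding cond_indep_def cprob_def F_def[symmetric]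
  proof (intro ballI)
    fix A B assume A[measurable]: "A \<in> sets MX" and B[measurable]: "B \<in> sets MY"
    have e1: "AE x in N. ?ce (indicator {x\<in>space N. Y' x \<in> B}) x = ?ce (indicator {x\<in>space N. Y x \<in> B}) x"
      by (rule fs.real_cond_exp_cong) (use ae in \<open>eventually_elim, auto simp: indicator_def\<close>)
    have e2: "AE x in N. ?ce (indicator ({x\<in>space N. X x \<in> A} \<inter> {x\<in>space N. Y' x \<in> B})) x
        = ?ce (indicator ({x\<in>space N. X x \<in> A} \<inter> {x\<in>space N. Y x \<in> B})) x"
      by (rule fs.real_cond_exp_cong) (use ae in \<open>eventually_elim, auto simp: indicator_def\<close>)
    have e3: "AE x in N. ?ce (indicator ({x\<in>space N. X x \<in> A} \<inter> {x\<in>space N. Y x \<in> B})) x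
        = ?ce (indicator {x\<in>space N. X x \<in> A}) x * ?ce (indicator {x\<in>space N. Y x \<in> B}) x"
      using ci A B unfolding cond_indep_def cprob_def F_def[symmetric] by blast
    show "AE x in N. ?ce (indicator ({x\<in>space N. X x \<in> A} \<inter> {x\<in>space N. Y' x \<in> B})) x
        = ?ce (indicator {x\<in>space N. X x \<in> A}) x * ?ce (indicator {x\<in>space N. Y' x \<in> B}) x"
      using e1 e2 e3 by eventually_elim simp
  qed
qed

lemma vimage_swap_eq:
  assumes mU: "U \<in> measurable N MU" and mD: "D \<in> measurable N MD"
  shows "vimage_algebra (space N) (\<lambda>x. (U x, D x)) (MU \<Otimes>\<^sub>M MD)
       = vimage_algebra (space N) (\<lambda>x. (D x, U x)) (MD \<Otimes>\<^sub>M MU)"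
proof -
  have gen: "{(\<lambda>x. (U x, D x)) -` S \<inter> space N | S. S \<in> sets (MU \<Otimes>\<^sub>M MD)}
      = {(\<lambda>x. (D x, U x)) -` S \<inter> space N | S. S \<in> sets (MD \<Otimes>\<^sub>M MU)}"
  proof (intro equalityI subsetI)
    fix T assume "T \<in> {(\<lambda>x. (U x, D x)) -` S \<inter> space N | S. S \<in> sets (MU \<Otimes>\<^sub>M MD)}"
    then obtain S where S: "S \<in> sets (MU \<Otimes>\<^sub>M MD)" and T: "T = (\<lambda>x. (U x, D x)) -` S \<inter> space N" by blast
    let ?S = "(\<lambda>(x,y). (y, x)) -` S \<inter> space (MD \<Otimes>\<^sub>M MU)"
    have "?S \<in> sets (MD \<Otimes>\<^sub>M MU)" by (rule measurable_sets[OF measurable_pair_swap' S])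
    moreover have "T = (\<lambda>x. (D x, U x)) -` ?S \<inter> space N"
      unfolding T using measurable_space[OF mU] measurable_space[OF mD]
      by (auto simp: space_pair_measure)
    ultimately show "T \<in> {(\<lambda>x. (D x, U x)) -` S \<inter> space N | S. S \<in> sets (MD \<Otimes>\<^sub>M MU)}" by blast
  next
    fix T assume "T \<in> {(\<lambda>x. (D x, U x)) -` S \<inter> space N | S. S \<in> sets (MD \<Otimes>\<^sub>M MU)}"
    then obtain S where S: "S \<in> sets (MD \<Otimes>\<^sub>M MU)" and T: "T = (\<lambda>x. (D x, U x)) -` S \<inter> space N" by blast
    let ?S = "(\<lambda>(x,y). (y, x)) -` S \<inter> space (MU \<Otimes>\<^sub>M MD)"
    have "?S \<in> sets (MU \<Otimes>\<^sub>M MD)" by (rule measurable_sets[OF measurable_pair_swap' S])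
    moreover have "T = (\<lambda>x. (U x, D x)) -` ?S \<inter> space N"
      unfolding T using measurable_space[OF mU] measurable_space[OF mD]
      by (auto simp: space_pair_measure)
    ultimately show "T \<in> {(\<lambda>x. (U x, D x)) -` S \<inter> space N | S. S \<in> sets (MU \<Otimes>\<^sub>M MD)}" by blast
  qed
  show ?thesis unfolding vimage_algebra_def gen ..
qed

lemma ci_swap_cond:
  assumes mU: "U \<in> measurable N MU" and mD: "D \<in> measurable N MD"
    and ci: "cond_indep N MX X MY Y (MU \<Otimes>\<^sub>M MD) (\<lambda>x. (U x, D x))"
  shows "cond_indep N MX X MY Y (MD \<Otimes>\<^sub>M MU) (\<lambda>x. (D x, U x))"
  using ci unfolding cond_indep_def cprob_def vimage_swap_eq[OF mU mD] .

theorem lemma1: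
  fixes M :: "'o measure"
    and MU :: "'u measure" and MZ :: "'z measure" and MW :: "'w measure"
    and MEy :: "'ey measure" and MEw :: "'ew measure" and MEa :: "'ea measure"
    and Y :: "'o \<Rightarrow> real" and A :: "'o \<Rightarrow> nat" and D :: "'o \<Rightarrow> real"
    and Z :: "'o \<Rightarrow> 'z" and W :: "'o \<Rightarrow> 'w" and U :: "'o \<Rightarrow> 'u"
    and ey :: "'o \<Rightarrow> 'ey" and ew :: "'o \<Rightarrow> 'ew" and ea :: "'o \<Rightarrow> 'ea"
    and Yf :: "nat \<Rightarrow> real \<Rightarrow> 'z \<Rightarrow> 'u \<Rightarrow> 'ey \<Rightarrow> real"
    and Wf :: "nat \<Rightarrow> real \<Rightarrow> 'z \<Rightarrow> 'u \<Rightarrow> 'ew \<Rightarrow> 'w"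
    and Af :: "real \<Rightarrow> 'z \<Rightarrow> 'u \<Rightarrow> 'ea \<Rightarrow> nat"
    and Yx :: "nat \<Rightarrow> real \<Rightarrow> 'u \<Rightarrow> 'ey \<Rightarrow> real"
    and Wx :: "'u \<Rightarrow> 'ew \<Rightarrow> 'w"
    and Ax :: "real \<Rightarrow> 'ea \<Rightarrow> nat"
    and dstar eps :: real and Zset :: "'z set"
    and fU :: "'u \<Rightarrow> real" and fc :: "'u \<Rightarrow> nat \<Rightarrow> real \<Rightarrow> 'z \<Rightarrow> real"
  assumes P: "prob_space M"
    and meas_Y: "Y \<in> borel_measurable M"
    and meas_A: "A \<in> measurable M (count_space UNIV)"
    and A01: "\<forall>\<omega>\<in>space M. A \<omega> \<in> {0, 1}"
    and meas_D: "D \<in> borel_measurable M"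
    and meas_Z: "Z \<in> measurable M MZ"
    and meas_W: "W \<in> measurable M MW"
    and meas_U: "U \<in> measurable M MU"
    and meas_ey: "ey \<in> measurable M MEy"
    and meas_ew: "ew \<in> measurable M MEw"
    and meas_ea: "ea \<in> measurable M MEa"
    and meas_Yx: "(\<lambda>(a, d, u, e). Yx a d u e)
                    \<in> borel_measurable (count_space UNIV \<Otimes>\<^sub>M (borel \<Otimes>\<^sub>M (MU \<Otimes>\<^sub>M MEy)))"
    and meas_Wx: "(\<lambda>(u, e). Wx u e) \<in> measurable (MU \<Otimes>\<^sub>M MEw) MW"
    and meas_Ax: "(\<lambda>(d, e). Ax d e) \<in> measurable (borel \<Otimes>\<^sub>M MEa) (count_space UNIV)"
    and eps_pos: "eps > 0"
    and Zset: "Zset \<in> sets MZ"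
    and Zset_full: "AE \<omega> in M. D \<omega> \<in> Dnbhd dstar eps \<longrightarrow> Z \<omega> \<in> Zset"
    \<comment> \<open>(PV)(a): structural equations on the local region\<close>
    and PVa_Y: "AE \<omega> in M. D \<omega> \<in> Dnbhd dstar eps \<and> Z \<omega> \<in> Zset \<longrightarrow>
                  Y \<omega> = Yf (A \<omega>) (D \<omega>) (Z \<omega>) (U \<omega>) (ey \<omega>)"
    and PVa_W: "AE \<omega> in M. D \<omega> \<in> Dnbhd dstar eps \<and> Z \<omega> \<in> Zset \<longrightarrow>
                  W \<omega> = Wf (A \<omega>) (D \<omega>) (Z \<omega>) (U \<omega>) (ew \<omega>)"
    and PVa_A: "AE \<omega> in M. D \<omega> \<in> Dnbhd dstar eps \<and> Z \<omega> \<in> Zset \<longrightarrow>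
                  A \<omega> = Af (D \<omega>) (Z \<omega>) (U \<omega>) (ea \<omega>)"
    \<comment> \<open>(PV)(b): local conditional independences\<close>
    and PVb_1: "cond_indep (local_measure M D dstar eps) MZ Z (MEy \<Otimes>\<^sub>M MEa) (\<lambda>\<omega>. (ey \<omega>, ea \<omega>))
                  (MU \<Otimes>\<^sub>M borel) (\<lambda>\<omega>. (U \<omega>, D \<omega>))"
    and PVb_2: "cond_indep (local_measure M D dstar eps) MEw ew (borel \<Otimes>\<^sub>M MZ) (\<lambda>\<omega>. (D \<omega>, Z \<omega>))
                  MU U"
    \<comment> \<open>(PV)(c): densities exist and are positive\<close>
    and PVc_U: "distributed M MU U (\<lambda>u. ennreal (fU u))"
    and PVc_joint: "distributed M (MU \<Otimes>\<^sub>M (count_space UNIV \<Otimes>\<^sub>M (lborel \<Otimes>\<^sub>M MZ)))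
                      (\<lambda>\<omega>. (U \<omega>, A \<omega>, D \<omega>, Z \<omega>))
                      (\<lambda>(u, a, d, z). ennreal (fU u * fc u a d z))"
    and PVc_pos: "\<forall>u a d z. fU u > 0 \<and> a \<in> {0, 1} \<and> d \<in> Dnbhd dstar eps \<and> z \<in> Zset
                      \<longrightarrow> fc u a d z > 0"
    \<comment> \<open>(PV)(d): exclusion restrictions\<close>
    and PVd_Y: "AE \<omega> in M. \<forall>a\<in>{0, 1}. \<forall>d\<in>Dnbhd dstar eps. \<forall>z\<in>Zset.
                  Yf a d z (U \<omega>) (ey \<omega>) = Yx a d (U \<omega>) (ey \<omega>)"
    and PVd_W: "AE \<omega> in M. \<forall>a\<in>{0, 1}. \<forall>d\<in>Dnbhd dstar eps. \<forall>z\<in>Zset.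
                  Wf a d z (U \<omega>) (ew \<omega>) = Wx (U \<omega>) (ew \<omega>)"
    and PVd_A: "AE \<omega> in M. \<forall>d\<in>Dnbhd dstar eps. \<forall>z\<in>Zset.
                  Af d z (U \<omega>) (ea \<omega>) = Ax d (ea \<omega>)"
  shows "cond_indep (local_measure M D dstar eps) borel Y MZ Z
            (borel \<Otimes>\<^sub>M MU) (\<lambda>\<omega>. (D \<omega>, U \<omega>))
         \<and> cond_indep (local_measure M D dstar eps) MW W (borel \<Otimes>\<^sub>M MZ) (\<lambda>\<omega>. (D \<omega>, Z \<omega>))
            MU U
         \<and> (cond_indep (local_measure M D dstar eps) MEa ea MU U borel D
            \<longrightarrow> cond_indep (local_measure M D dstar eps) (count_space UNIV) A MU U borel D)"
proof -
  interpret P: prob_space M by (rule P)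
  define SD where "SD = {\<omega>\<in>space M. D \<omega> \<in> Dnbhd dstar eps}"
  have Dn: "Dnbhd dstar eps \<in> sets borel" unfolding Dnbhd_def by simp
  have SD: "SD \<in> sets M" unfolding SD_def using meas_D Dn by measurable
  define L where "L = local_measure M D dstar eps"
  have L_eq: "L = uniform_measure M SD" unfolding L_def local_measure_def SD_def ..
  have sL: "sets L = sets M" and spL: "space L = space M" unfolding L_eq by simp_all
  have mL: "f \<in> measurable L X" if "f \<in> measurable M X" for f and X :: "'x measure"
    unfolding measurable_cong_sets[OF sL refl] by (rule that)
  have finL: "finite_measure L"
  proof (rule finite_measureI)
    have "emeasure L (space L) = emeasure M (SD \<inter> space M) / emeasure M SD"
      unfolding L_eq using SD by simp
    also have "\<dots> = emeasure M SD / emeasure M SD"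
      using sets.sets_into_space[OF SD] by (simp add: Int_absorb2)
    finally show "emeasure L (space L) \<noteq> \<infinity>"
      using P.emeasure_finite[of SD]
      by (cases "emeasure M SD = 0") (auto simp: ennreal_divide_times divide_ennreal_def ennreal_mult_eq_top_iff)
  qed
  have AEL: "AE \<omega> in L. Q \<omega>" if "AE \<omega> in M. D \<omega> \<in> Dnbhd dstar eps \<longrightarrow> Q \<omega>" for Q
    unfolding L_eq
    by (rule AE_uniform_measureI[OF SD]) (use that in \<open>eventually_elim, auto simp: SD_def\<close>)
  have eY: "AE \<omega> in L. Y \<omega> = Yx (Ax (D \<omega>) (ea \<omega>)) (D \<omega>) (U \<omega>) (ey \<omega>)"
  proof (rule AEL)
    show "AE \<omega> in M. D \<omega> \<in> Dnbhd dstar eps \<longrightarrow> Y \<omega> = Yx (Ax (D \<omega>) (ea \<omega>)) (D \<omega>) (U \<omega>) (ey \<omega>)"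
      using Zset_full PVa_Y PVa_A PVd_Y PVd_A AE_space
    proof eventually_elim
      case (elim \<omega>)
      show ?case
      proof
        assume d: "D \<omega> \<in> Dnbhd dstar eps"
        have z: "Z \<omega> \<in> Zset" using elim d by blast
        have a: "A \<omega> \<in> {0, 1}" using A01 elim by blast
        have "A \<omega> = Ax (D \<omega>) (ea \<omega>)" using elim d z by metis
        moreover have "Y \<omega> = Yx (A \<omega>) (D \<omega>) (U \<omega>) (ey \<omega>)" using elim d z a by metis
        ultimately show "Y \<omega> = Yx (Ax (D \<omega>) (ea \<omega>)) (D \<omega>) (U \<omega>) (ey \<omega>)" by simp
      qed
    qed
  qed
  have eW: "AE \<omega> in L. W \<omega> = Wx (U \<omega>) (ew \<omega>)"
  proof (rule AEL)
    show "AE \<omega> in M. D \<omega> \<in> Dnbhd dstar eps \<longrightarrow> W \<omega> = Wx (U \<omega>) (ew \<omega>)"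
      using Zset_full PVa_W PVd_W AE_space
    proof eventually_elim
      case (elim \<omega>)
      show ?case
      proof
        assume d: "D \<omega> \<in> Dnbhd dstar eps"
        have z: "Z \<omega> \<in> Zset" using elim d by blast
        have a: "A \<omega> \<in> {0, 1}" using A01 elim by blast
        show "W \<omega> = Wx (U \<omega>) (ew \<omega>)" using elim d z a by metis
      qed
    qed
  qed
  have eA: "AE \<omega> in L. A \<omega> = Ax (D \<omega>) (ea \<omega>)"
  proof (rule AEL)
    show "AE \<omega> in M. D \<omega> \<in> Dnbhd dstar eps \<longrightarrow> A \<omega> = Ax (D \<omega>) (ea \<omega>)"
      using Zset_full PVa_A PVd_A AE_space
    proof eventually_elim
      case (elim \<omega>)
      show ?case
      proof
        assume d: "D \<omega> \<in> Dnbhd dstar eps"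
        have z: "Z \<omega> \<in> Zset" using elim d by blast
        show "A \<omega> = Ax (D \<omega>) (ea \<omega>)" using elim d z by metis
      qed
    qed
  qed
  have LY: "Y \<in> borel_measurable L" by (rule mL[OF meas_Y])
  have LA: "A \<in> measurable L (count_space UNIV)" by (rule mL[OF meas_A])
  have LD: "D \<in> borel_measurable L" by (rule mL[OF meas_D])
  have LZ: "Z \<in> measurable L MZ" by (rule mL[OF meas_Z])
  have LW: "W \<in> measurable L MW" by (rule mL[OF meas_W])
  have LU: "U \<in> measurable L MU" by (rule mL[OF meas_U])
  have Ley: "ey \<in> measurable L MEy" by (rule mL[OF meas_ey])
  have Lew: "ew \<in> measurable L MEw" by (rule mL[OF meas_ew])
  have Lea: "ea \<in> measurable L MEa" by (rule mL[OF meas_ea])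
  have gAx: "(\<lambda>(e, d). Ax d e) \<in> measurable (MEa \<Otimes>\<^sub>M borel) (count_space UNIV)"
    using measurable_compose[OF measurable_pair_swap' meas_Ax] by (simp add: case_prod_beta)
  have gWx: "(\<lambda>(e, u). Wx u e) \<in> measurable (MEw \<Otimes>\<^sub>M MU) MW"
    using measurable_compose[OF measurable_pair_swap' meas_Wx] by (simp add: case_prod_beta)
  define h where "h = (\<lambda>p::(('ey \<times> 'ea) \<times> ('u \<times> real)).
      (Ax (snd (snd p)) (snd (fst p)), snd (snd p), fst (snd p), fst (fst p)))"
  have hm: "h \<in> measurable ((MEy \<Otimes>\<^sub>M MEa) \<Otimes>\<^sub>M (MU \<Otimes>\<^sub>M borel))
                (count_space UNIV \<Otimes>\<^sub>M (borel \<Otimes>\<^sub>M (MU \<Otimes>\<^sub>M MEy)))"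
  proof -
    have ax: "(\<lambda>p::(('ey \<times> 'ea) \<times> ('u \<times> real)). Ax (snd (snd p)) (snd (fst p)))
        \<in> measurable ((MEy \<Otimes>\<^sub>M MEa) \<Otimes>\<^sub>M (MU \<Otimes>\<^sub>M borel)) (count_space UNIV)"
    proof -
      have aux: "(\<lambda>p::(('ey \<times> 'ea) \<times> ('u \<times> real)). (snd (snd p), snd (fst p)))
          \<in> measurable ((MEy \<Otimes>\<^sub>M MEa) \<Otimes>\<^sub>M (MU \<Otimes>\<^sub>M borel)) (borel \<Otimes>\<^sub>M MEa)" by measurable
      show ?thesis using measurable_compose[OF aux meas_Ax] by (simp add: case_prod_beta)
    qed
    show ?thesis unfolding h_def by (intro measurable_Pair ax) measurable
  qed
  define gY where "gY = (\<lambda>p. (\<lambda>(a, d, u, e). Yx a d u e) (h p))"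
  have gYm: "gY \<in> borel_measurable ((MEy \<Otimes>\<^sub>M MEa) \<Otimes>\<^sub>M (MU \<Otimes>\<^sub>M borel))"
    unfolding gY_def by (rule measurable_compose[OF hm meas_Yx])
  have gYv: "gY ((ey \<omega>, ea \<omega>), (U \<omega>, D \<omega>)) = Yx (Ax (D \<omega>) (ea \<omega>)) (D \<omega>) (U \<omega>) (ey \<omega>)" for \<omega>
    unfolding gY_def h_def by simp
  have partA: "cond_indep L borel Y MZ Z (borel \<Otimes>\<^sub>M MU) (\<lambda>\<omega>. (D \<omega>, U \<omega>))"
  proof -
    have c1: "cond_indep L MZ Z borel (\<lambda>\<omega>. gY ((ey \<omega>, ea \<omega>), (U \<omega>, D \<omega>))) (MU \<Otimes>\<^sub>M borel) (\<lambda>\<omega>. (U \<omega>, D \<omega>))"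
      by (rule ci_fun[OF finL LZ measurable_Pair[OF Ley Lea] measurable_Pair[OF LU LD] gYm PVb_1[folded L_def]])
    have c2: "cond_indep L MZ Z borel Y (MU \<Otimes>\<^sub>M borel) (\<lambda>\<omega>. (U \<omega>, D \<omega>))"
    proof (rule ci_cong[OF finL LZ _ LY _ _ c1])
      show "(\<lambda>\<omega>. gY ((ey \<omega>, ea \<omega>), U \<omega>, D \<omega>)) \<in> borel_measurable L"
        using measurable_compose[OF _ gYm, of "\<lambda>\<omega>. ((ey \<omega>, ea \<omega>), U \<omega>, D \<omega>)"] Ley Lea LU LD by simp
      show "(\<lambda>\<omega>. (U \<omega>, D \<omega>)) \<in> measurable L (MU \<Otimes>\<^sub>M borel)" using LU LD by simp
      show "AE x in L. gY ((ey x, ea x), U x, D x) = Y x" using eY unfolding gYv by auto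
    qed
    show ?thesis by (rule ci_swap_cond[OF LU LD ci_sym[OF c2]])
  qed
  have partB: "cond_indep L MW W (borel \<Otimes>\<^sub>M MZ) (\<lambda>\<omega>. (D \<omega>, Z \<omega>)) MU U"
  proof -
    have DZ: "(\<lambda>\<omega>. (D \<omega>, Z \<omega>)) \<in> measurable L (borel \<Otimes>\<^sub>M MZ)" using LD LZ by simp
    have c1: "cond_indep L (borel \<Otimes>\<^sub>M MZ) (\<lambda>\<omega>. (D \<omega>, Z \<omega>)) MW (\<lambda>\<omega>. Wx (U \<omega>) (ew \<omega>)) MU U"
      using ci_fun[OF finL DZ Lew LU gWx ci_sym[OF PVb_2[folded L_def]]] by simp
    have c2: "cond_indep L (borel \<Otimes>\<^sub>M MZ) (\<lambda>\<omega>. (D \<omega>, Z \<omega>)) MW W MU U"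
    proof (rule ci_cong[OF finL DZ _ LW LU _ c1])
      show "(\<lambda>\<omega>. Wx (U \<omega>) (ew \<omega>)) \<in> measurable L MW"
        using measurable_compose[OF _ meas_Wx, of "\<lambda>\<omega>. (U \<omega>, ew \<omega>)"] LU Lew by simp
      show "AE x in L. Wx (U x) (ew x) = W x" using eW by auto
    qed
    show ?thesis by (rule ci_sym[OF c2])
  qed
  have partC: "cond_indep L (count_space UNIV) A MU U borel D"
    if H: "cond_indep L MEa ea MU U borel D"
  proof -
    have c1: "cond_indep L MU U (count_space UNIV) (\<lambda>\<omega>. Ax (D \<omega>) (ea \<omega>)) borel D"
      using ci_fun[OF finL LU Lea LD gAx ci_sym[OF H]] by simp
    have c2: "cond_indep L MU U (count_space UNIV) A borel D"
    proof (rule ci_cong[OF finL LU _ LA LD _ c1])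
      show "(\<lambda>\<omega>. Ax (D \<omega>) (ea \<omega>)) \<in> measurable L (count_space UNIV)"
        using measurable_compose[OF _ meas_Ax, of "\<lambda>\<omega>. (D \<omega>, ea \<omega>)"] LD Lea by simp
      show "AE x in L. Ax (D x) (ea x) = A x" using eA by auto
    qed
    show ?thesis by (rule ci_sym[OF c2])
  qed
  show ?thesis using partA partB partC unfolding L_def by blast
qed

thm_deps lemma1

end
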